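(* Let $\{e_n\}_{n\in\mathbb{Z}}$ be i.i.d. real random variables with $\mathbb{E}|e_1|^2<\infty$, let $q,d\ge1$, $r,\mu_1,\mu_2,\phi_i,\psi_i\in\mathbb{R}$, and with $a_n=\mu_2+e_n+\sum_{i=1}^q\psi_ie_{n-i}$, $b_n=\mu_1+e_n+\sum_{i=1}^q\phi_ie_{n-i}$ assume $\mathbb{P}(a_n\le r,\ b_n\le r)+\mathbb{P}(a_n>r,\ b_n>r)\neq 0$. Let $\{y_n\}_{n\in\mathbb{Z}}$ be the unique strictly stationary solution of $$y_n=\begin{cases}\mu_1+e_n+\sum_{i=1}^q\phi_ie_{n-i}, & \text{if } y_{n-d}\le r,\\ \mu_2+e_n+\sum_{i=1}^q\psi_ie_{n-i}, & \text{if } y_{n-d}>r.\end{cases}$$ Then $\mathbb{E}y_0^2<\infty$ and there exist constants $C>0$ and $\rho\in(0,1)$ such that $|\operatorname{Cov}(y_0,y_k)|\le C\rho^k$ for all $k\ge1$; in particular, when $\operatorname{Var}(y_0)>0$, the autocorrelation function $\rho_k=\operatorname{Cov}(y_0,y_k)/\operatorname{Var}(y_0)$ satisfies $\rho_k=O(\rho^k)$ as $k\to\infty$.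
   Context: A solution means a process on the same probability space as $\{e_n\}$ satisfying the equation almost surely for every $n$; under the stated hypothesis such a strictly stationary, ergodic solution exists and is unique. *)

theory Defs
  imports "HOL-Probability.Probability" "HOL-Library.Landau_Symbols"
begin

definition strictly_stationary :: "'a measure \<Rightarrow> (int \<Rightarrow> 'a \<Rightarrow> real) \<Rightarrow> bool" where
  "strictly_stationary M y \<longleftrightarrow>
     (\<forall>J k. finite J \<longrightarrow>
        distr M (PiM J (\<lambda>_. borel)) (\<lambda>\<omega>. \<lambda>n\<in>J. y (n + k) \<omega>)
      = distr M (PiM J (\<lambda>_. borel)) (\<lambda>\<omega>. \<lambda>n\<in>J. y n \<omega>))"

definition covariance :: "'a measure \<Rightarrow> ('a \<Rightarrow> real) \<Rightarrow> ('a \<Rightarrow> real) \<Rightarrow> real" where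
  "covariance M X Y =
     integral\<^sup>L M (\<lambda>\<omega>. (X \<omega> - integral\<^sup>L M X) * (Y \<omega> - integral\<^sup>L M Y))"

end

theory Submission
  imports Defs
begin


abbreviation PI :: "(int \<Rightarrow> real) measure" where "PI \<equiv> PiM UNIV (\<lambda>_. borel)"

definition dep :: "((int \<Rightarrow> real) \<Rightarrow> real) \<Rightarrow> int set \<Rightarrow> bool" where
  "dep F I \<longleftrightarrow> (\<forall>x x'. (\<forall>i\<in>I. x i = x' i) \<longrightarrow> F x = F x')"

lemma comp_meas[measurable]: "(\<lambda>x. x i) \<in> borel_measurable PI"
  by measurable

locale setar = fixes q d :: nat and r \<mu>1 \<mu>2 :: real and \<phi> \<psi> :: "nat \<Rightarrow> real"
begin

definition Aa :: "(int \<Rightarrow> real) \<Rightarrow> int \<Rightarrow> real" where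
  "Aa x n = \<mu>2 + x n + (\<Sum>i=1..q. \<psi> i * x (n - int i))"
definition Bb :: "(int \<Rightarrow> real) \<Rightarrow> int \<Rightarrow> real" where
  "Bb x n = \<mu>1 + x n + (\<Sum>i=1..q. \<phi> i * x (n - int i))"
definition good :: "(int \<Rightarrow> real) \<Rightarrow> int \<Rightarrow> bool" where
  "good x n \<longleftrightarrow> (Aa x n \<le> r \<and> Bb x n \<le> r) \<or> (Aa x n > r \<and> Bb x n > r)"

fun U :: "(int \<Rightarrow> real) \<Rightarrow> int \<Rightarrow> nat \<Rightarrow> real" where
  "U x m 0 = Aa x m"
| "U x m (Suc j) = (if U x m j \<le> r then Bb x (m + int (Suc j) * int d) else Aa x (m + int (Suc j) * int d))"

lemma Aa_meas[measurable]: "(\<lambda>x. Aa x n) \<in> borel_measurable PI"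
  unfolding Aa_def by measurable
lemma Bb_meas[measurable]: "(\<lambda>x. Bb x n) \<in> borel_measurable PI"
  unfolding Bb_def by measurable
lemma good_meas[measurable]: "{x \<in> space PI. good x n} \<in> sets PI"
  unfolding good_def by measurable

lemma U_meas[measurable]: "(\<lambda>x. U x m j) \<in> borel_measurable PI"
proof (induction j)
  case 0 then show ?case by simp
next
  case (Suc j)
  note [measurable] = Suc
  show ?case by simp measurable
qed

lemma win: "{n - int q..n} \<subseteq> I \<Longrightarrow> i \<in> {1..q} \<Longrightarrow> n - int i \<in> I"
  "{n - int q..n} \<subseteq> I \<Longrightarrow> n \<in> I"
  by (auto simp: subset_iff)

lemma dep_Aa: "{n - int q..n} \<subseteq> I \<Longrightarrow> dep (\<lambda>x. Aa x n) I"
  unfolding dep_def Aa_def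
  by (auto intro!: sum.cong arg_cong2[where f="(+)"] dest: win)

lemma dep_Bb: "{n - int q..n} \<subseteq> I \<Longrightarrow> dep (\<lambda>x. Bb x n) I"
  unfolding dep_def Bb_def
  by (auto intro!: sum.cong arg_cong2[where f="(+)"] dest: win)

lemma dep_U: "{m - int q..m + int j * int d} \<subseteq> I \<Longrightarrow> dep (\<lambda>x. U x m j) I"
proof (induction j)
  case 0 then show ?case using dep_Aa by simp
next
  case (Suc j)
  have s: "{m - int q..m + int j * int d} \<subseteq> I"
    using Suc.prems by (auto simp: algebra_simps)
  have a: "dep (\<lambda>x. Aa x (m + int (Suc j) * int d)) I" "dep (\<lambda>x. Bb x (m + int (Suc j) * int d)) I"
  proof -
    have "0 \<le> int (Suc j) * int d" by simp
    then have "{m + int (Suc j) * int d - int q..m + int (Suc j) * int d} \<subseteq> I"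
      using Suc.prems by (smt (verit) atLeastAtMost_iff subset_iff)
    then show "dep (\<lambda>x. Aa x (m + int (Suc j) * int d)) I" "dep (\<lambda>x. Bb x (m + int (Suc j) * int d)) I"
      by (auto intro!: dep_Aa dep_Bb)
  qed
  show ?case using Suc.IH[OF s] a unfolding dep_def by (simp del: of_nat_Suc) metis
qed

lemma good_dep: "{n - int q..n} \<subseteq> I \<Longrightarrow> (\<forall>i\<in>I. x i = x' i) \<Longrightarrow> good x n = good x' n"
  using dep_Aa dep_Bb unfolding good_def dep_def by metis

context fixes x :: "int \<Rightarrow> real" and Y :: "int \<Rightarrow> real"
  assumes Y: "\<And>n. Y n = (if Y (n - int d) \<le> r then Bb x n else Aa x n)"
begin

lemma ind_agree: "\<exists>i\<le>j. good x (m + int i * int d) \<Longrightarrow> (Y (m + int j * int d) \<le> r \<longleftrightarrow> U x m j \<le> r)"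
proof (induction j)
  case 0
  then have "good x m" by simp
  then show ?case using Y[of m] unfolding good_def by auto
next
  case (Suc j)
  have e: "m + int (Suc j) * int d - int d = m + int j * int d" by (simp add: algebra_simps)
  show ?case
  proof (cases "\<exists>i\<le>j. good x (m + int i * int d)")
    case True
    from Suc.IH[OF True] show ?thesis using Y[of "m + int (Suc j) * int d"] unfolding e
      by (simp del: of_nat_Suc)
  next
    case False
    with Suc.prems have g: "good x (m + int (Suc j) * int d)"
      using le_Suc_eq by blast
    show ?thesis using Y[of "m + int (Suc j) * int d"] g unfolding good_def
      by (auto simp del: of_nat_Suc)
  qed
qed

lemma val_agree: "\<exists>i<j. good x (m + int i * int d) \<Longrightarrow> Y (m + int j * int d) = U x m j"
proof -
  assume a: "\<exists>i<j. good x (m + int i * int d)"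
  then obtain j' where j: "j = Suc j'" by (cases j) auto
  have "\<exists>i\<le>j'. good x (m + int i * int d)" using a j less_Suc_eq_le by blast
  from ind_agree[OF this] have "Y (m + int j' * int d) \<le> r \<longleftrightarrow> U x m j' \<le> r" .
  moreover have e: "m + int (Suc j') * int d - int d = m + int j' * int d" by (simp add: algebra_simps)
  ultimately show ?thesis using Y[of "m + int (Suc j') * int d"] unfolding j e
    by (simp del: of_nat_Suc)
qed

lemma Y_bound: "\<bar>Y n\<bar> \<le> \<bar>Aa x n\<bar> + \<bar>Bb x n\<bar>"
  using Y[of n] by auto

end

lemma U_bound: "\<bar>U x m j\<bar> \<le> \<bar>Aa x (m + int j * int d)\<bar> + \<bar>Bb x (m + int j * int d)\<bar>"
  by (cases j) auto

end


locale iidseq = prob_space M for M :: "'a measure" +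
  fixes e :: "int \<Rightarrow> 'a \<Rightarrow> real"
  assumes e_indep: "indep_vars (\<lambda>_. borel) e UNIV"
    and e_ident: "\<And>n. distr M borel (e n) = distr M borel (e 1)"
begin

lemma e_meas[measurable]: "e n \<in> borel_measurable M"
  using e_indep unfolding indep_vars_def by auto

lemma X_meas[measurable]: "(\<lambda>\<omega> i. e (i + t) \<omega>) \<in> measurable M PI"
  by (rule measurable_PiM_single') auto

lemma X0_meas[measurable]: "(\<lambda>\<omega> i. e i \<omega>) \<in> measurable M PI"
  by (rule measurable_PiM_single') auto

lemma indep_block:
  assumes IJ: "I \<inter> J = {}"
    and F[measurable]: "F \<in> borel_measurable PI" and G[measurable]: "G \<in> borel_measurable PI"
    and dF: "dep F I" and dG: "dep G J"
    and iF: "integrable M (\<lambda>\<omega>. F (\<lambda>i. e i \<omega>))" and iG: "integrable M (\<lambda>\<omega>. G (\<lambda>i. e i \<omega>))"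
  shows "(\<integral>\<omega>. F (\<lambda>i. e i \<omega>) * G (\<lambda>i. e i \<omega>) \<partial>M) = (\<integral>\<omega>. F (\<lambda>i. e i \<omega>) \<partial>M) * (\<integral>\<omega>. G (\<lambda>i. e i \<omega>) \<partial>M)"
proof -
  have ind: "indep_var (PiM I (\<lambda>_. borel)) (\<lambda>\<omega>. restrict (\<lambda>i. e i \<omega>) I) (PiM J (\<lambda>_. borel)) (\<lambda>\<omega>. restrict (\<lambda>i. e i \<omega>) J)"
    by (rule indep_var_restrict[OF e_indep IJ]) auto
  define ext where "ext K z = (\<lambda>i::int. if i \<in> K then z i else (0::real))" for K z
  have em: "ext K \<in> measurable (PiM K (\<lambda>_. borel)) PI" for K
    unfolding ext_def
  proof (rule measurable_PiM_single')
    fix i :: int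
    show "(\<lambda>\<omega>. (\<lambda>i. if i \<in> K then \<omega> i else 0) i) \<in> borel_measurable (PiM K (\<lambda>_. borel))"
      by (cases "i \<in> K") (auto intro: measurable_component_singleton)
  qed auto
  have "indep_var borel ((F \<circ> ext I) \<circ> (\<lambda>\<omega>. restrict (\<lambda>i. e i \<omega>) I)) borel ((G \<circ> ext J) \<circ> (\<lambda>\<omega>. restrict (\<lambda>i. e i \<omega>) J))"
    by (rule indep_var_compose[OF ind]) (auto intro: measurable_comp[OF em])
  moreover have "(F \<circ> ext I) \<circ> (\<lambda>\<omega>. restrict (\<lambda>i. e i \<omega>) I) = (\<lambda>\<omega>. F (\<lambda>i. e i \<omega>))"
    using dF by (auto simp: dep_def ext_def fun_eq_iff)
  moreover have "(G \<circ> ext J) \<circ> (\<lambda>\<omega>. restrict (\<lambda>i. e i \<omega>) J) = (\<lambda>\<omega>. G (\<lambda>i. e i \<omega>))"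
    using dG by (auto simp: dep_def ext_def fun_eq_iff)
  ultimately have "indep_var borel (\<lambda>\<omega>. F (\<lambda>i. e i \<omega>)) borel (\<lambda>\<omega>. G (\<lambda>i. e i \<omega>))" by simp
  then show ?thesis using iF iG by (rule indep_var_lebesgue_integral)
qed

definition D where "D = distr M borel (e 1)"
definition PD where "PD = PiM (UNIV::int set) (\<lambda>_. D)"

lemma D_prob: "prob_space D"
  unfolding D_def by (rule prob_space_distr) simp

lemma shift_distr: "distr M PI (\<lambda>\<omega> i. e (i + t) \<omega>) = PD"
proof -
  have rv: "random_variable borel (e i)" for i by simp
  have "distr M (\<Pi>\<^sub>M i\<in>UNIV. borel) (\<lambda>x. \<lambda>i\<in>UNIV. e i x) = (\<Pi>\<^sub>M i\<in>UNIV. distr M borel (e i))"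
    using indep_vars_iff_distr_eq_PiM[where I=UNIV and M'="\<lambda>_. borel" and X=e] e_indep rv by simp
  also have "(\<Pi>\<^sub>M i\<in>UNIV. distr M borel (e i)) = PD"
    unfolding PD_def D_def using e_ident by (intro PiM_cong) auto
  finally have d0: "distr M PI (\<lambda>\<omega> i. e i \<omega>) = PD" by (simp add: restrict_UNIV)
  have sm: "(\<lambda>z i. z (i + t)) \<in> measurable PI (PI::(int \<Rightarrow> real) measure)"
    by (rule measurable_PiM_single') auto
  have "distr M PI (\<lambda>\<omega> i. e (i + t) \<omega>) = distr (distr M PI (\<lambda>\<omega> i. e i \<omega>)) PI (\<lambda>z i. z (i + t))"
    by (subst distr_distr) (auto simp: comp_def sm)
  also have "\<dots> = distr PD PI (\<lambda>z i. z (i + t))" by (simp add: d0)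
  also have "\<dots> = distr PD (\<Pi>\<^sub>M i\<in>UNIV. D) (\<lambda>z. \<lambda>i\<in>UNIV. z (i + t))"
    by (intro distr_cong) (auto simp: PD_def D_def intro!: sets_PiM_cong)
  also have "\<dots> = PD"
    unfolding PD_def by (rule distr_PiM_reindex) (auto simp: D_prob inj_on_def)
  finally show ?thesis .
qed

lemma shift_integral:
  fixes F :: "(int \<Rightarrow> real) \<Rightarrow> real"
  assumes [measurable]: "F \<in> borel_measurable PI"
  shows "(\<integral>\<omega>. F (\<lambda>i. e (i + t) \<omega>) \<partial>M) = integral\<^sup>L PD F"
  using integral_distr[of "\<lambda>\<omega> i. e (i + t) \<omega>" M PI F] shift_distr by simp

lemma shift_integrable:
  fixes F :: "(int \<Rightarrow> real) \<Rightarrow> real"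
  assumes [measurable]: "F \<in> borel_measurable PI"
  shows "integrable M (\<lambda>\<omega>. F (\<lambda>i. e (i + t) \<omega>)) \<longleftrightarrow> integrable PD F"
  using integrable_distr_eq[of "\<lambda>\<omega> i. e (i + t) \<omega>" M PI F] shift_distr by simp

end


context prob_space begin

definition L2 :: "('a \<Rightarrow> real) \<Rightarrow> bool" where
  "L2 f \<longleftrightarrow> f \<in> borel_measurable M \<and> integrable M (\<lambda>\<omega>. (f \<omega>)\<^sup>2)"

lemma L2_prod: assumes "L2 f" "L2 g" shows "integrable M (\<lambda>\<omega>. f \<omega> * g \<omega>)"
proof (rule Bochner_Integration.integrable_bound)
  show "integrable M (\<lambda>\<omega>. (f \<omega>)\<^sup>2 + (g \<omega>)\<^sup>2)" using assms by (auto simp: L2_def)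
  show "(\<lambda>\<omega>. f \<omega> * g \<omega>) \<in> borel_measurable M" using assms by (auto simp: L2_def)
  show "AE x in M. norm (f x * g x) \<le> norm ((f x)\<^sup>2 + (g x)\<^sup>2)"
  proof (rule AE_I2)
    fix x
    have "2 * \<bar>f x\<bar> * \<bar>g x\<bar> \<le> \<bar>f x\<bar>\<^sup>2 + \<bar>g x\<bar>\<^sup>2" by (rule sum_squares_bound)
    moreover have "0 \<le> \<bar>f x\<bar> * \<bar>g x\<bar>" by simp
    ultimately have "\<bar>f x\<bar> * \<bar>g x\<bar> \<le> \<bar>f x\<bar>\<^sup>2 + \<bar>g x\<bar>\<^sup>2" by linarith
    then have "\<bar>f x\<bar> * \<bar>g x\<bar> \<le> (f x)\<^sup>2 + (g x)\<^sup>2" by simp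
    then have "\<bar>f x * g x\<bar> \<le> (f x)\<^sup>2 + (g x)\<^sup>2" by (simp add: abs_mult)
    then show "norm (f x * g x) \<le> norm ((f x)\<^sup>2 + (g x)\<^sup>2)" by simp
  qed
qed

lemma L2_int: "L2 f \<Longrightarrow> integrable M f"
  unfolding L2_def by (auto intro: square_integrable_imp_integrable)

lemma L2_const: "L2 (\<lambda>_. c)"
  unfolding L2_def by auto

lemma L2_add: assumes "L2 f" "L2 g" shows "L2 (\<lambda>\<omega>. f \<omega> + g \<omega>)"
proof -
  have "integrable M (\<lambda>\<omega>. (f \<omega>)\<^sup>2 + 2 * (f \<omega> * g \<omega>) + (g \<omega>)\<^sup>2)"
    using assms L2_prod[OF assms] by (auto simp: L2_def)
  moreover have "(\<lambda>\<omega>. f \<omega> + g \<omega>) \<in> borel_measurable M" using assms by (auto simp: L2_def)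
  ultimately show ?thesis by (simp add: L2_def power2_sum algebra_simps)
qed

lemma L2_cmult: assumes "L2 f" shows "L2 (\<lambda>\<omega>. c * f \<omega>)"
proof -
  have "integrable M (\<lambda>\<omega>. c\<^sup>2 * (f \<omega>)\<^sup>2)" using assms by (auto simp: L2_def)
  moreover have "(\<lambda>\<omega>. c * f \<omega>) \<in> borel_measurable M" using assms by (auto simp: L2_def)
  ultimately show ?thesis by (simp add: L2_def power_mult_distrib)
qed

lemma L2_sum: "finite S \<Longrightarrow> (\<And>i. i \<in> S \<Longrightarrow> L2 (f i)) \<Longrightarrow> L2 (\<lambda>\<omega>. \<Sum>i\<in>S. f i \<omega>)"
  by (induction S rule: finite_induct) (auto simp: L2_const intro: L2_add)

lemma L2_bound: assumes "L2 f" "g \<in> borel_measurable M" "AE \<omega> in M. \<bar>g \<omega>\<bar> \<le> \<bar>f \<omega>\<bar>"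
  shows "L2 g"
  unfolding L2_def
proof
  show "integrable M (\<lambda>\<omega>. (g \<omega>)\<^sup>2)"
  proof (rule Bochner_Integration.integrable_bound)
    show "integrable M (\<lambda>\<omega>. (f \<omega>)\<^sup>2)" using assms by (auto simp: L2_def)
  qed (use assms in \<open>auto elim!: AE_mp intro!: AE_I2 simp: abs_le_square_iff\<close>)
qed fact

lemma cov_eq: assumes "L2 X" "L2 Y"
  shows "covariance M X Y = (\<integral>\<omega>. X \<omega> * Y \<omega> \<partial>M) - (\<integral>\<omega>. X \<omega> \<partial>M) * (\<integral>\<omega>. Y \<omega> \<partial>M)"
proof -
  let ?a = "\<integral>\<omega>. X \<omega> \<partial>M" and ?b = "\<integral>\<omega>. Y \<omega> \<partial>M"
  have iX: "integrable M X" and iY: "integrable M Y" using assms L2_int by auto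
  have iXY: "integrable M (\<lambda>\<omega>. X \<omega> * Y \<omega>)" using L2_prod[OF assms] .
  have "(\<lambda>\<omega>. (X \<omega> - ?a) * (Y \<omega> - ?b)) = (\<lambda>\<omega>. X \<omega> * Y \<omega> - ?b * X \<omega> - ?a * Y \<omega> + ?a * ?b)"
    by (auto simp: fun_eq_iff algebra_simps)
  then have "covariance M X Y = (\<integral>\<omega>. X \<omega> * Y \<omega> - ?b * X \<omega> - ?a * Y \<omega> + ?a * ?b \<partial>M)"
    unfolding covariance_def by simp
  also have "\<dots> = (\<integral>\<omega>. X \<omega> * Y \<omega> \<partial>M) - ?b * ?a - ?a * ?b + ?a * ?b"
    using iX iY iXY by (simp add: prob_space)
  finally show ?thesis by (simp add: algebra_simps)
qed

lemma amgm: "(e::real) > 0 \<Longrightarrow> \<bar>f * g\<bar> \<le> (e * f\<^sup>2 + g\<^sup>2 / e) / 2"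
proof -
  assume e: "e > 0"
  have "0 \<le> (e * \<bar>f\<bar> - \<bar>g\<bar>)\<^sup>2" by simp
  then have h: "2 * e * (\<bar>f\<bar> * \<bar>g\<bar>) \<le> e * (e * f\<^sup>2) + g\<^sup>2"
    unfolding power2_diff by (simp add: power_mult_distrib power2_eq_square mult.assoc mult.left_commute)
  have "(e * f\<^sup>2 + g\<^sup>2 / e) / 2 = (e * (e * f\<^sup>2) + g\<^sup>2) / (2 * e)"
    using e by (simp add: add_divide_distrib)
  also have "\<dots> \<ge> (2 * e * (\<bar>f\<bar> * \<bar>g\<bar>)) / (2 * e)"
    using h e by (intro divide_right_mono) auto
  also have "(2 * e * (\<bar>f\<bar> * \<bar>g\<bar>)) / (2 * e) = \<bar>f * g\<bar>" using e by (simp add: abs_mult)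
  finally show ?thesis .
qed

lemma abs_int_prod_le: assumes "L2 F" "L2 G" "e > 0"
  shows "\<bar>\<integral>\<omega>. F \<omega> * G \<omega> \<partial>M\<bar> \<le> (e * (\<integral>\<omega>. (F \<omega>)\<^sup>2 \<partial>M) + (\<integral>\<omega>. (G \<omega>)\<^sup>2 \<partial>M) / e) / 2"
proof -
  have "\<bar>\<integral>\<omega>. F \<omega> * G \<omega> \<partial>M\<bar> \<le> (\<integral>\<omega>. \<bar>F \<omega> * G \<omega>\<bar> \<partial>M)"
    using integral_norm_bound[of M "\<lambda>\<omega>. F \<omega> * G \<omega>"] by simp
  also have "\<dots> \<le> (\<integral>\<omega>. (e * (F \<omega>)\<^sup>2 + (G \<omega>)\<^sup>2 / e) / 2 \<partial>M)"
    using assms L2_prod[OF assms(1,2)] amgm[OF assms(3)] by (intro integral_mono) (auto simp: L2_def)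
  also have "\<dots> = (e * (\<integral>\<omega>. (F \<omega>)\<^sup>2 \<partial>M) + (\<integral>\<omega>. (G \<omega>)\<^sup>2 \<partial>M) / e) / 2"
    using assms by (simp add: L2_def)
  finally show ?thesis .
qed

lemma cov_bound: assumes "L2 F" "L2 G" "e > 0"
  and K: "(\<integral>\<omega>. (F \<omega>)\<^sup>2 \<partial>M) \<le> K" and dl: "(\<integral>\<omega>. (G \<omega>)\<^sup>2 \<partial>M) \<le> \<delta>"
  shows "\<bar>(\<integral>\<omega>. F \<omega> * G \<omega> \<partial>M) - (\<integral>\<omega>. F \<omega> \<partial>M) * (\<integral>\<omega>. G \<omega> \<partial>M)\<bar>
     \<le> (e * K + \<delta> / e) / 2 + (1 + K) * (e + \<delta> / e) / 4"
proof -
  have l1: "L2 (\<lambda>_. 1)" by (rule L2_const)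
  have a1: "\<bar>\<integral>\<omega>. F \<omega> * G \<omega> \<partial>M\<bar> \<le> (e * K + \<delta> / e) / 2"
    using abs_int_prod_le[OF assms(1-3)] K dl assms(3)
    by (smt (verit, ccfv_SIG) divide_right_mono mult_left_mono)
  have a2: "\<bar>\<integral>\<omega>. F \<omega> \<partial>M\<bar> \<le> (1 + K) / 2"
    using abs_int_prod_le[OF assms(1) l1, of 1] K by (simp add: prob_space)
  have a3': "\<bar>\<integral>\<omega>. G \<omega> \<partial>M\<bar> \<le> (e + (\<integral>\<omega>. (G \<omega>)\<^sup>2 \<partial>M) / e) / 2"
    using abs_int_prod_le[OF l1 assms(2) assms(3)] by (simp add: prob_space)
  have "(\<integral>\<omega>. (G \<omega>)\<^sup>2 \<partial>M) / e \<le> \<delta> / e" using dl assms(3) by (simp add: divide_right_mono)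
  then have "e + (\<integral>\<omega>. (G \<omega>)\<^sup>2 \<partial>M) / e \<le> e + \<delta> / e" by (rule add_left_mono)
  then have "(e + (\<integral>\<omega>. (G \<omega>)\<^sup>2 \<partial>M) / e) / 2 \<le> (e + \<delta> / e) / 2" by (rule divide_right_mono) simp
  then have a3: "\<bar>\<integral>\<omega>. G \<omega> \<partial>M\<bar> \<le> (e + \<delta> / e) / 2" using a3' by (rule order_trans[rotated])
  have "\<bar>(\<integral>\<omega>. F \<omega> \<partial>M) * (\<integral>\<omega>. G \<omega> \<partial>M)\<bar> \<le> (1 + K) / 2 * ((e + \<delta> / e) / 2)"
  proof -
    have "0 \<le> (\<integral>\<omega>. (F \<omega>)\<^sup>2 \<partial>M)" by (intro Bochner_Integration.integral_nonneg) auto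
    then have "0 \<le> K" using K by (rule order_trans)
    then have "0 \<le> (1 + K) / 2" by simp
    then show ?thesis unfolding abs_mult by (intro mult_mono[OF a2 a3]) auto
  qed
  then have pb: "\<bar>(\<integral>\<omega>. F \<omega> \<partial>M) * (\<integral>\<omega>. G \<omega> \<partial>M)\<bar> \<le> (1 + K) * (e + \<delta> / e) / 4" by simp
  have "\<bar>(\<integral>\<omega>. F \<omega> * G \<omega> \<partial>M) - (\<integral>\<omega>. F \<omega> \<partial>M) * (\<integral>\<omega>. G \<omega> \<partial>M)\<bar>
     \<le> \<bar>\<integral>\<omega>. F \<omega> * G \<omega> \<partial>M\<bar> + \<bar>(\<integral>\<omega>. F \<omega> \<partial>M) * (\<integral>\<omega>. G \<omega> \<partial>M)\<bar>"
    by (rule abs_triangle_ineq4)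
  also have "\<dots> \<le> (e * K + \<delta> / e) / 2 + (1 + K) * (e + \<delta> / e) / 4"
    by (rule add_mono[OF a1 pb])
  finally show ?thesis .
qed

end


context setar begin
lemma Aa_shift: "Aa (\<lambda>i. x (i + m)) 0 = Aa x m"
  unfolding Aa_def by (simp add: algebra_simps)
lemma Bb_shift: "Bb (\<lambda>i. x (i + m)) 0 = Bb x m"
  unfolding Bb_def by (simp add: algebra_simps)
lemma good_shift: "good (\<lambda>i. x (i + m)) 0 = good x m"
  unfolding good_def Aa_shift Bb_shift ..
lemma good_pred[measurable]: "Measurable.pred PI (\<lambda>x. good x n)"
  unfolding good_def by measurable
end

locale main = iidseq M e + setar q d r \<mu>1 \<mu>2 \<phi> \<psi>
  for M :: "'a measure" and e :: "int \<Rightarrow> 'a \<Rightarrow> real" and q d r \<mu>1 \<mu>2 \<phi> \<psi> +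
  fixes y :: "int \<Rightarrow> 'a \<Rightarrow> real"
  assumes e_L2: "integrable M (\<lambda>\<omega>. \<bar>e 1 \<omega>\<bar>\<^sup>2)"
    and d: "d \<ge> 1"
    and nondeg0: "measure M {\<omega>\<in>space M.
             \<mu>2 + e 0 \<omega> + (\<Sum>i=1..q. \<psi> i * e (0 - int i) \<omega>) \<le> r \<and>
             \<mu>1 + e 0 \<omega> + (\<Sum>i=1..q. \<phi> i * e (0 - int i) \<omega>) \<le> r}
         + measure M {\<omega>\<in>space M.
             \<mu>2 + e 0 \<omega> + (\<Sum>i=1..q. \<psi> i * e (0 - int i) \<omega>) > r \<and>
             \<mu>1 + e 0 \<omega> + (\<Sum>i=1..q. \<phi> i * e (0 - int i) \<omega>) > r} \<noteq> 0"
    and y_meas[measurable]: "\<And>n. y n \<in> borel_measurable M"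
    and y_eq: "\<And>n. AE \<omega> in M. y n \<omega> =
        (if y (n - int d) \<omega> \<le> r
         then \<mu>1 + e n \<omega> + (\<Sum>i=1..q. \<phi> i * e (n - int i) \<omega>)
         else \<mu>2 + e n \<omega> + (\<Sum>i=1..q. \<psi> i * e (n - int i) \<omega>))"
begin

lemma L2_e: "L2 (e n)"
proof -
  have "integrable M (\<lambda>\<omega>. (e 1 \<omega>)\<^sup>2)" using e_L2 by simp
  then have "integrable (distr M borel (e 1)) (\<lambda>x. x\<^sup>2)"
    by (subst integrable_distr_eq) auto
  then have "integrable (distr M borel (e n)) (\<lambda>x. x\<^sup>2)" unfolding e_ident[of n] .
  then have "integrable M (\<lambda>\<omega>. (e n \<omega>)\<^sup>2)"
    by (subst (asm) integrable_distr_eq) auto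
  then show ?thesis unfolding L2_def by simp
qed

lemma L2_Aa: "L2 (\<lambda>\<omega>. Aa (\<lambda>i. e i \<omega>) n)"
  unfolding Aa_def by (intro L2_add L2_const L2_sum L2_cmult L2_e) auto
lemma L2_Bb: "L2 (\<lambda>\<omega>. Bb (\<lambda>i. e i \<omega>) n)"
  unfolding Bb_def by (intro L2_add L2_const L2_sum L2_cmult L2_e) auto

lemma L2_abs: "L2 f \<Longrightarrow> L2 (\<lambda>\<omega>. \<bar>f \<omega>\<bar>)"
  by (rule L2_bound) (auto simp: L2_def)

definition H where "H t \<omega> = \<bar>Aa (\<lambda>i. e i \<omega>) t\<bar> + \<bar>Bb (\<lambda>i. e i \<omega>) t\<bar>"

lemma L2_H: "L2 (H t)"
  unfolding H_def by (intro L2_add L2_abs L2_Aa L2_Bb)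

lemma H_meas[measurable]: "H t \<in> borel_measurable M"
  unfolding H_def by measurable

lemma AE_path: "AE \<omega> in M. \<forall>n. y n \<omega> = (if y (n - int d) \<omega> \<le> r then Bb (\<lambda>i. e i \<omega>) n else Aa (\<lambda>i. e i \<omega>) n)"
  unfolding AE_all_countable Aa_def Bb_def using y_eq by simp

lemma y_H: "AE \<omega> in M. \<bar>y n \<omega>\<bar> \<le> H n \<omega>"
  using AE_path
proof eventually_elim
  case (elim \<omega>)
  then have "y n \<omega> = (if y (n - int d) \<omega> \<le> r then Bb (\<lambda>i. e i \<omega>) n else Aa (\<lambda>i. e i \<omega>) n)" by blast
  then show ?case by (auto simp: H_def)
qed

lemma L2_y: "L2 (y n)"
proof (rule L2_bound[OF L2_H])
  show "AE \<omega> in M. \<bar>y n \<omega>\<bar> \<le> \<bar>H n \<omega>\<bar>" using y_H[of n] by eventually_elim (simp add: H_def)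
qed simp

definition K0 :: real where "K0 = integral\<^sup>L PD (\<lambda>z. (\<bar>Aa z 0\<bar> + \<bar>Bb z 0\<bar>)\<^sup>2)"

lemma EH2: "(\<integral>\<omega>. (H t \<omega>)\<^sup>2 \<partial>M) = K0"
proof -
  have "(\<integral>\<omega>. (H t \<omega>)\<^sup>2 \<partial>M) = (\<integral>\<omega>. (\<lambda>z. (\<bar>Aa z 0\<bar> + \<bar>Bb z 0\<bar>)\<^sup>2) (\<lambda>i. e (i + t) \<omega>) \<partial>M)"
    unfolding H_def using Aa_shift[of "\<lambda>i. e i _"] Bb_shift[of "\<lambda>i. e i _"] by simp
  also have "\<dots> = K0" unfolding K0_def by (rule shift_integral) measurable
  finally show ?thesis .
qed

definition p :: real where "p = integral\<^sup>L PD (\<lambda>z. if good z 0 then 1 else 0)"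

lemma Egood: "(\<integral>\<omega>. (if good (\<lambda>i. e i \<omega>) m then 1 else 0) \<partial>M) = p"
proof -
  have "(\<integral>\<omega>. (if good (\<lambda>i. e i \<omega>) m then 1 else 0) \<partial>M)
      = (\<integral>\<omega>. (\<lambda>z. if good z 0 then 1 else 0::real) (\<lambda>i. e (i + m) \<omega>) \<partial>M)"
    using good_shift[of "\<lambda>i. e i _"] by simp
  also have "\<dots> = p" unfolding p_def by (rule shift_integral) measurable
  finally show ?thesis .
qed

lemma good_predM[measurable]: "Measurable.pred M (\<lambda>\<omega>. good (\<lambda>i. e i \<omega>) m)"
  by (rule measurable_compose[OF X0_meas good_pred])

lemma ind_int: "Measurable.pred M P \<Longrightarrow> integrable M (\<lambda>\<omega>. if P \<omega> then 1 else (0::real))"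
  by (rule integrable_const_bound[where B=1]) auto

lemma p_le1: "p \<le> 1"
proof -
  let ?g = "\<lambda>\<omega>. if good (\<lambda>i. e i \<omega>) 0 then 1 else (0::real)"
  have "p = (\<integral>\<omega>. ?g \<omega> \<partial>M)" using Egood[of 0] by simp
  moreover have "(\<integral>\<omega>. ?g \<omega> \<partial>M) \<le> (\<integral>\<omega>. 1 \<partial>M)"
    by (intro integral_mono ind_int) auto
  ultimately show "p \<le> 1" by (simp add: prob_space)
qed

lemma p_pos: "0 < p"
proof -
  let ?g = "\<lambda>\<omega>. if good (\<lambda>i. e i \<omega>) 0 then 1 else (0::real)"
  have pg: "p = (\<integral>\<omega>. ?g \<omega> \<partial>M)" using Egood[of 0] by simp
  define S1 where "S1 = {\<omega>\<in>space M.
             \<mu>2 + e 0 \<omega> + (\<Sum>i=1..q. \<psi> i * e (0 - int i) \<omega>) \<le> r \<and>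
             \<mu>1 + e 0 \<omega> + (\<Sum>i=1..q. \<phi> i * e (0 - int i) \<omega>) \<le> r}"
  define S2 where "S2 = {\<omega>\<in>space M.
             \<mu>2 + e 0 \<omega> + (\<Sum>i=1..q. \<psi> i * e (0 - int i) \<omega>) > r \<and>
             \<mu>1 + e 0 \<omega> + (\<Sum>i=1..q. \<phi> i * e (0 - int i) \<omega>) > r}"
  have S1m: "S1 \<in> sets M" unfolding S1_def by measurable
  have S2m: "S2 \<in> sets M" unfolding S2_def by measurable
  have A0: "Aa (\<lambda>i. e i \<omega>) 0 = \<mu>2 + e 0 \<omega> + (\<Sum>i=1..q. \<psi> i * e (0 - int i) \<omega>)" for \<omega>
    unfolding Aa_def by simp
  have B0: "Bb (\<lambda>i. e i \<omega>) 0 = \<mu>1 + e 0 \<omega> + (\<Sum>i=1..q. \<phi> i * e (0 - int i) \<omega>)" for \<omega>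
    unfolding Bb_def by simp
  have gi: "?g \<omega> = indicator S1 \<omega> + indicator S2 \<omega>" if "\<omega> \<in> space M" for \<omega>
    using that unfolding S1_def S2_def good_def A0 B0 indicator_def by auto
  have "(\<integral>\<omega>. ?g \<omega> \<partial>M) = (\<integral>\<omega>. indicator S1 \<omega> + indicator S2 \<omega> \<partial>M)"
    by (rule Bochner_Integration.integral_cong[OF refl gi])
  also have "\<dots> = (\<integral>\<omega>. indicator S1 \<omega> \<partial>M) + (\<integral>\<omega>. indicator S2 \<omega> \<partial>M)"
    by (rule Bochner_Integration.integral_add) (auto intro!: integrable_real_indicator S1m S2m simp: less_top[symmetric])
  also have "\<dots> = measure M S1 + measure M S2"
    using S1m S2m by (simp add: Int_absorb2 sets.sets_into_space)
  finally have "p = measure M S1 + measure M S2" using pg by simp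
  then have "p \<noteq> 0" using nondeg0[folded S1_def S2_def] by simp
  moreover have "0 \<le> (\<integral>\<omega>. ?g \<omega> \<partial>M)" by (intro Bochner_Integration.integral_nonneg) auto
  then have "0 \<le> p" using pg by simp
  ultimately show "0 < p" by (simp add: less_le)
qed

definition L :: nat where "L = d * (q + 1)"

lemma L_ge: "q + 1 \<le> L" "0 < L"
proof -
  have "1 * (q + 1) \<le> d * (q + 1)" using d by (rule mult_le_mono1)
  then show "q + 1 \<le> L" "0 < L" unfolding L_def by auto
qed

lemma lt_helper: "l < n \<Longrightarrow> int l * int L + int q < int n * int L"
proof -
  assume "l < n"
  then have "(l + 1) * L \<le> n * L" by (intro mult_right_mono) auto
  then have "l * L + q < n * L" using L_ge by simp
  then show ?thesis by (simp flip: of_nat_mult of_nat_add)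
qed

definition bad :: "int \<Rightarrow> nat \<Rightarrow> (int \<Rightarrow> real) \<Rightarrow> bool" where
  "bad s n x \<longleftrightarrow> (\<forall>l<n. \<not> good x (s + int l * int L))"

lemma bad_pred[measurable]: "Measurable.pred PI (bad s n)"
  unfolding bad_def by measurable

lemma bad_predM[measurable]: "Measurable.pred M (\<lambda>\<omega>. bad s n (\<lambda>i. e i \<omega>))"
  by (rule measurable_compose[OF X0_meas bad_pred])

lemma bad_dep: "dep (\<lambda>x. if bad s n x then 1 else 0) {..< s + int n * int L - int q}"
  unfolding dep_def
proof (intro allI impI)
  fix x x' :: "int \<Rightarrow> real" assume a: "\<forall>i\<in>{..< s + int n * int L - int q}. x i = x' i"
  have "good x (s + int l * int L) = good x' (s + int l * int L)" if "l < n" for l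
  proof (rule good_dep[OF _ a])
    show "{s + int l * int L - int q..s + int l * int L} \<subseteq> {..<s + int n * int L - int q}"
      using lt_helper[OF that] by auto
  qed
  then show "(if bad s n x then 1 else 0) = (if bad s n x' then 1 else (0::real))"
    unfolding bad_def by auto
qed

lemma Enotgood: "(\<integral>\<omega>. (if good (\<lambda>i. e i \<omega>) m then 0 else 1) \<partial>M) = 1 - p"
proof -
  have "(\<integral>\<omega>. (if good (\<lambda>i. e i \<omega>) m then 0 else 1) \<partial>M) = (\<integral>\<omega>. 1 - (if good (\<lambda>i. e i \<omega>) m then 1 else 0) \<partial>M)"
    by (rule Bochner_Integration.integral_cong) auto
  also have "\<dots> = 1 - p"
    using Egood[of m] by (subst Bochner_Integration.integral_diff) (auto intro: ind_int simp: prob_space)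
  finally show ?thesis .
qed

lemma bad_prob: "(\<integral>\<omega>. (if bad s n (\<lambda>i. e i \<omega>) then 1 else 0) \<partial>M) = (1 - p) ^ n"
proof (induction n)
  case 0
  then show ?case by (simp add: bad_def prob_space)
next
  case (Suc n)
  let ?F = "\<lambda>x. if bad s n x then 1 else (0::real)"
  let ?G = "\<lambda>x. if good x (s + int n * int L) then 0 else (1::real)"
  have eq: "(if bad s (Suc n) x then 1 else 0) = ?F x * ?G x" for x
    unfolding bad_def by (auto simp: less_Suc_eq)
  have "(\<integral>\<omega>. (if bad s (Suc n) (\<lambda>i. e i \<omega>) then 1 else 0) \<partial>M)
     = (\<integral>\<omega>. ?F (\<lambda>i. e i \<omega>) * ?G (\<lambda>i. e i \<omega>) \<partial>M)"
    unfolding eq ..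
  also have "\<dots> = (\<integral>\<omega>. ?F (\<lambda>i. e i \<omega>) \<partial>M) * (\<integral>\<omega>. ?G (\<lambda>i. e i \<omega>) \<partial>M)"
  proof (rule indep_block[where I="{..< s + int n * int L - int q}" and J="{s + int n * int L - int q .. s + int n * int L}"])
    show "dep ?F {..< s + int n * int L - int q}" by (rule bad_dep)
    show "dep ?G {s + int n * int L - int q .. s + int n * int L}"
      unfolding dep_def using good_dep[OF order_refl] by metis
  qed (auto intro: ind_int intro!: integrable_const_bound[where B=1])
  also have "\<dots> = (1 - p) ^ n * (1 - p)" using Suc.IH Enotgood by simp
  finally show ?case by simp
qed

lemma bad_H: "(\<integral>\<omega>. (if bad (t - int n * int L) n (\<lambda>i. e i \<omega>) then 1 else 0) * (H t \<omega>)\<^sup>2 \<partial>M) = (1 - p) ^ n * K0"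
proof -
  let ?F = "\<lambda>x. if bad (t - int n * int L) n x then 1 else (0::real)"
  let ?G = "\<lambda>x. (\<bar>Aa x t\<bar> + \<bar>Bb x t\<bar>)\<^sup>2"
  have "(\<integral>\<omega>. ?F (\<lambda>i. e i \<omega>) * ?G (\<lambda>i. e i \<omega>) \<partial>M) = (\<integral>\<omega>. ?F (\<lambda>i. e i \<omega>) \<partial>M) * (\<integral>\<omega>. ?G (\<lambda>i. e i \<omega>) \<partial>M)"
  proof (rule indep_block[where I="{..< t - int q}" and J="{t - int q .. t}"])
    show "dep ?F {..< t - int q}" using bad_dep[of "t - int n * int L" n] by simp
    show "dep ?G {t - int q .. t}" using dep_Aa[OF order_refl] dep_Bb[OF order_refl]
      unfolding dep_def by metis
    show "integrable M (\<lambda>\<omega>. ?G (\<lambda>i. e i \<omega>))" using L2_H[of t] by (simp add: L2_def H_def)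
  qed (auto intro: ind_int)
  then show ?thesis using bad_prob EH2[of t] by (simp add: H_def)
qed

definition V :: "int \<Rightarrow> nat \<Rightarrow> 'a \<Rightarrow> real" where
  "V t n \<omega> = U (\<lambda>i. e i \<omega>) (t - int n * int L) (n * (q + 1))"

lemma V_meas[measurable]: "V t n \<in> borel_measurable M"
  unfolding V_def by (rule measurable_compose[OF X0_meas U_meas])

lemma chain_end: "t - int n * int L + int (n * (q + 1)) * int d = t"
  unfolding L_def by (simp add: algebra_simps)

lemma V_H: "\<bar>V t n \<omega>\<bar> \<le> H t \<omega>"
  unfolding V_def H_def using U_bound[of "\<lambda>i. e i \<omega>" "t - int n * int L" "n * (q + 1)"]
  by (simp only: chain_end)

lemma L2_V: "L2 (V t n)"
  by (rule L2_bound[OF L2_H[of t]]) (auto intro!: AE_I2 order_trans[OF V_H] abs_ge_self)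

lemma V_close: "AE \<omega> in M. \<bar>y t \<omega> - V t n \<omega>\<bar> \<le> 2 * (if bad (t - int n * int L) n (\<lambda>i. e i \<omega>) then 1 else 0) * H t \<omega>"
  using AE_path
proof eventually_elim
  case (elim \<omega>)
  let ?x = "\<lambda>i. e i \<omega>" and ?Y = "\<lambda>m. y m \<omega>"
  have Y: "\<And>m. ?Y m = (if ?Y (m - int d) \<le> r then Bb ?x m else Aa ?x m)" using elim by blast
  show ?case
  proof (cases "bad (t - int n * int L) n ?x")
    case True
    have "\<bar>y t \<omega> - V t n \<omega>\<bar> \<le> \<bar>y t \<omega>\<bar> + \<bar>V t n \<omega>\<bar>" by simp
    also have "\<dots> \<le> H t \<omega> + H t \<omega>"
      using Y_bound[of ?Y ?x, OF Y, of t] V_H[of t n \<omega>] by (simp add: H_def)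
    finally show ?thesis using True by simp
  next
    case False
    then obtain l where l: "l < n" "good ?x (t - int n * int L + int l * int L)"
      unfolding bad_def by auto
    have "l * (q + 1) < n * (q + 1)" by (rule mult_less_mono1[OF l(1)]) simp
    moreover have "int (l * (q + 1)) * int d = int l * int L" unfolding L_def by (simp add: algebra_simps)
    ultimately have "\<exists>i<n * (q + 1). good ?x (t - int n * int L + int i * int d)" using l by metis
    from val_agree[of ?Y ?x, OF Y this] have "y t \<omega> = V t n \<omega>"
      unfolding V_def chain_end .
    then show ?thesis using False by simp
  qed
qed

lemma ED: "(\<integral>\<omega>. (y t \<omega> - V t n \<omega>)\<^sup>2 \<partial>M) \<le> 4 * K0 * (1 - p) ^ n"
proof -
  let ?I = "\<lambda>\<omega>. if bad (t - int n * int L) n (\<lambda>i. e i \<omega>) then 1 else (0::real)"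
  have "(\<integral>\<omega>. (y t \<omega> - V t n \<omega>)\<^sup>2 \<partial>M) \<le> (\<integral>\<omega>. 4 * (?I \<omega> * (H t \<omega>)\<^sup>2) \<partial>M)"
  proof (rule integral_mono_AE)
    show "integrable M (\<lambda>\<omega>. (y t \<omega> - V t n \<omega>)\<^sup>2)"
      using L2_add[OF L2_y L2_cmult[OF L2_V, of "-1"]] by (simp add: L2_def)
    have iH: "integrable M (\<lambda>\<omega>. (H t \<omega>)\<^sup>2)" using L2_H[of t] by (simp add: L2_def)
    have "integrable M (\<lambda>\<omega>. ?I \<omega> * (H t \<omega>)\<^sup>2)"
      by (rule Bochner_Integration.integrable_bound[OF iH]) auto
    then show "integrable M (\<lambda>\<omega>. 4 * (?I \<omega> * (H t \<omega>)\<^sup>2))" by simp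
    show "AE \<omega> in M. (y t \<omega> - V t n \<omega>)\<^sup>2 \<le> 4 * (?I \<omega> * (H t \<omega>)\<^sup>2)"
      using V_close[of t n]
    proof eventually_elim
      case (elim \<omega>)
      have "(y t \<omega> - V t n \<omega>)\<^sup>2 = \<bar>y t \<omega> - V t n \<omega>\<bar>\<^sup>2" by simp
      also have "\<dots> \<le> (2 * ?I \<omega> * H t \<omega>)\<^sup>2"
        using elim by (intro power_mono) auto
      also have "\<dots> = 4 * (?I \<omega> * (H t \<omega>)\<^sup>2)" by (simp add: power2_eq_square)
      finally show ?case .
    qed
  qed
  also have "\<dots> = 4 * ((1 - p) ^ n * K0)" using bad_H[of t n] by simp
  finally show ?thesis by (simp add: algebra_simps)
qed

lemma EV2: "(\<integral>\<omega>. (V t n \<omega>)\<^sup>2 \<partial>M) \<le> K0"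
proof -
  have "(\<integral>\<omega>. (V t n \<omega>)\<^sup>2 \<partial>M) \<le> (\<integral>\<omega>. (H t \<omega>)\<^sup>2 \<partial>M)"
  proof (rule integral_mono)
    show "integrable M (\<lambda>\<omega>. (V t n \<omega>)\<^sup>2)" using L2_V by (simp add: L2_def)
    show "integrable M (\<lambda>\<omega>. (H t \<omega>)\<^sup>2)" using L2_H by (simp add: L2_def)
    fix \<omega> show "(V t n \<omega>)\<^sup>2 \<le> (H t \<omega>)\<^sup>2"
      using V_H[of t n \<omega>] by (simp add: abs_le_square_iff[symmetric])
  qed
  then show ?thesis using EH2 by simp
qed

lemma Ey2: "(\<integral>\<omega>. (y t \<omega>)\<^sup>2 \<partial>M) \<le> K0"
proof -
  have "(\<integral>\<omega>. (y t \<omega>)\<^sup>2 \<partial>M) \<le> (\<integral>\<omega>. (H t \<omega>)\<^sup>2 \<partial>M)"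
  proof (rule integral_mono_AE)
    show "integrable M (\<lambda>\<omega>. (y t \<omega>)\<^sup>2)" using L2_y by (simp add: L2_def)
    show "integrable M (\<lambda>\<omega>. (H t \<omega>)\<^sup>2)" using L2_H by (simp add: L2_def)
    show "AE \<omega> in M. (y t \<omega>)\<^sup>2 \<le> (H t \<omega>)\<^sup>2"
      using y_H[of t] by eventually_elim (simp add: abs_le_square_iff[symmetric] H_def)
  qed
  then show ?thesis using EH2 by simp
qed
lemma L2_diff: "L2 f \<Longrightarrow> L2 g \<Longrightarrow> L2 (\<lambda>\<omega>. f \<omega> - g \<omega>)"
  using L2_add[OF _ L2_cmult, of f g "-1"] by simp

lemma V_dep: "dep (\<lambda>z. U z (t - int n * int L) (n * (q + 1))) {t - int n * int L - int q .. t}"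
  using dep_U[of "t - int n * int L" "n * (q + 1)" "{t - int n * int L - int q .. t}"] chain_end[of t n]
  by simp

lemma EVW: assumes "int n * int L + int q < k"
  shows "(\<integral>\<omega>. V 0 n \<omega> * V k n \<omega> \<partial>M) = (\<integral>\<omega>. V 0 n \<omega> \<partial>M) * (\<integral>\<omega>. V k n \<omega> \<partial>M)"
  unfolding V_def
proof (rule indep_block[where I="{0 - int n * int L - int q .. 0}" and J="{k - int n * int L - int q .. k}"])
  show "{0 - int n * int L - int q..0} \<inter> {k - int n * int L - int q..k} = {}" using assms by auto
  show "integrable M (\<lambda>\<omega>. U (\<lambda>i. e i \<omega>) (0 - int n * int L) (n * (q + 1)))"
    using L2_int[OF L2_V[of 0 n]] unfolding V_def .
  show "integrable M (\<lambda>\<omega>. U (\<lambda>i. e i \<omega>) (k - int n * int L) (n * (q + 1)))"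
    using L2_int[OF L2_V[of k n]] unfolding V_def .
  show "dep (\<lambda>z. U z (0 - int n * int L) (n * (q + 1))) {0 - int n * int L - int q .. 0}" by (rule V_dep)
  show "dep (\<lambda>z. U z (k - int n * int L) (n * (q + 1))) {k - int n * int L - int q .. k}" by (rule V_dep)
qed auto

lemma cov_main: assumes "int n * int L + int q < int k" "\<epsilon> > 0"
  shows "\<bar>covariance M (y 0) (y (int k))\<bar> \<le>
    2 * ((\<epsilon> * K0 + 4 * K0 * (1 - p) ^ n / \<epsilon>) / 2 + (1 + K0) * (\<epsilon> + 4 * K0 * (1 - p) ^ n / \<epsilon>) / 4)"
proof -
  define V0 where "V0 = V 0 n"
  define W where "W = V (int k) n"
  define D0 where "D0 = (\<lambda>\<omega>. y 0 \<omega> - V0 \<omega>)"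
  define Dk where "Dk = (\<lambda>\<omega>. y (int k) \<omega> - W \<omega>)"
  define B where "B = (\<epsilon> * K0 + 4 * K0 * (1 - p) ^ n / \<epsilon>) / 2 + (1 + K0) * (\<epsilon> + 4 * K0 * (1 - p) ^ n / \<epsilon>) / 4"
  have LV0: "L2 V0" and LW: "L2 W" unfolding V0_def W_def by (rule L2_V)+
  have LD0: "L2 D0" and LDk: "L2 Dk" unfolding D0_def Dk_def V0_def W_def by (intro L2_diff L2_y L2_V)+
  have Ly0: "L2 (y 0)" and Lyk: "L2 (y (int k))" by (rule L2_y)+
  have ED0: "(\<integral>\<omega>. (D0 \<omega>)\<^sup>2 \<partial>M) \<le> 4 * K0 * (1 - p) ^ n" unfolding D0_def V0_def by (rule ED)
  have EDk: "(\<integral>\<omega>. (Dk \<omega>)\<^sup>2 \<partial>M) \<le> 4 * K0 * (1 - p) ^ n" unfolding Dk_def W_def by (rule ED)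
  have EV0: "(\<integral>\<omega>. (V0 \<omega>)\<^sup>2 \<partial>M) \<le> K0" unfolding V0_def by (rule EV2)
  have Eyk: "(\<integral>\<omega>. (y (int k) \<omega>)\<^sup>2 \<partial>M) \<le> K0" by (rule Ey2)
  have "(\<lambda>\<omega>. y 0 \<omega> * y (int k) \<omega>) = (\<lambda>\<omega>. V0 \<omega> * W \<omega> + V0 \<omega> * Dk \<omega> + y (int k) \<omega> * D0 \<omega>)"
    by (auto simp: D0_def Dk_def fun_eq_iff algebra_simps)
  then have e1: "(\<integral>\<omega>. y 0 \<omega> * y (int k) \<omega> \<partial>M) =
      (\<integral>\<omega>. V0 \<omega> * W \<omega> \<partial>M) + (\<integral>\<omega>. V0 \<omega> * Dk \<omega> \<partial>M) + (\<integral>\<omega>. y (int k) \<omega> * D0 \<omega> \<partial>M)"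
    using L2_prod[OF LV0 LW] L2_prod[OF LV0 LDk] L2_prod[OF Lyk LD0] by simp
  have "y 0 = (\<lambda>\<omega>. V0 \<omega> + D0 \<omega>)" by (auto simp: D0_def)
  then have e2: "(\<integral>\<omega>. y 0 \<omega> \<partial>M) = (\<integral>\<omega>. V0 \<omega> \<partial>M) + (\<integral>\<omega>. D0 \<omega> \<partial>M)"
    using L2_int[OF LV0] L2_int[OF LD0] by simp
  have "y (int k) = (\<lambda>\<omega>. W \<omega> + Dk \<omega>)" by (auto simp: Dk_def)
  then have e3: "(\<integral>\<omega>. y (int k) \<omega> \<partial>M) = (\<integral>\<omega>. W \<omega> \<partial>M) + (\<integral>\<omega>. Dk \<omega> \<partial>M)"
    using L2_int[OF LW] L2_int[OF LDk] by simp
  have e4: "(\<integral>\<omega>. V0 \<omega> * W \<omega> \<partial>M) = (\<integral>\<omega>. V0 \<omega> \<partial>M) * (\<integral>\<omega>. W \<omega> \<partial>M)"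
    unfolding V0_def W_def using assms(1) by (rule EVW)
  have c: "covariance M (y 0) (y (int k)) =
     ((\<integral>\<omega>. V0 \<omega> * Dk \<omega> \<partial>M) - (\<integral>\<omega>. V0 \<omega> \<partial>M) * (\<integral>\<omega>. Dk \<omega> \<partial>M))
   + ((\<integral>\<omega>. y (int k) \<omega> * D0 \<omega> \<partial>M) - (\<integral>\<omega>. y (int k) \<omega> \<partial>M) * (\<integral>\<omega>. D0 \<omega> \<partial>M))"
    unfolding cov_eq[OF Ly0 Lyk] e1 e2 e4 using e3 by (simp add: algebra_simps)
  have b1: "\<bar>(\<integral>\<omega>. V0 \<omega> * Dk \<omega> \<partial>M) - (\<integral>\<omega>. V0 \<omega> \<partial>M) * (\<integral>\<omega>. Dk \<omega> \<partial>M)\<bar> \<le> B"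
    unfolding B_def by (rule cov_bound[OF LV0 LDk assms(2) EV0 EDk])
  have b2: "\<bar>(\<integral>\<omega>. y (int k) \<omega> * D0 \<omega> \<partial>M) - (\<integral>\<omega>. y (int k) \<omega> \<partial>M) * (\<integral>\<omega>. D0 \<omega> \<partial>M)\<bar> \<le> B"
    unfolding B_def by (rule cov_bound[OF Lyk LD0 assms(2) Eyk ED0])
  have "\<bar>covariance M (y 0) (y (int k))\<bar> \<le> B + B"
    unfolding c by (rule order_trans[OF abs_triangle_ineq add_mono[OF b1 b2]])
  then show ?thesis by (simp only: B_def mult_2)
qed

lemma cov_crude: "\<bar>covariance M (y 0) (y (int k))\<bar> \<le> (K0 + K0) / 2 + (1 + K0) * (1 + K0) / 4"
  unfolding cov_eq[OF L2_y L2_y]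
  using cov_bound[OF L2_y L2_y _ Ey2 Ey2, of 1] by simp

lemma K0_nonneg: "0 \<le> K0"
  using EH2[of 0] by (metis Bochner_Integration.integral_nonneg zero_le_power2)

lemma k_bound: "k \<le> ((k - q - 1) div L) * L + L + q"
proof -
  have "k - q - 1 = ((k - q - 1) div L) * L + (k - q - 1) mod L" by (rule div_mult_mod_eq[symmetric])
  moreover have "(k - q - 1) mod L < L" using L_ge by simp
  ultimately show ?thesis by linarith
qed

lemma final_bound: "\<exists>C \<rho>. C > 0 \<and> 0 < \<rho> \<and> \<rho> < 1 \<and>
       (\<forall>k::nat. k \<ge> 1 \<longrightarrow> \<bar>covariance M (y 0) (y (int k))\<bar> \<le> C * \<rho> ^ k)"
proof -
  define c where "c = 1 - p"
  have c01: "0 \<le> c" "c < 1" using p_pos p_le1 unfolding c_def by auto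
  define \<sigma> where "\<sigma> = max (1/2) (sqrt c)"
  have \<sigma>01: "0 < \<sigma>" "\<sigma> < 1" using c01 unfolding \<sigma>_def by (auto simp: real_sqrt_lt_1_iff)
  have c\<sigma>: "c \<le> \<sigma> * \<sigma>"
  proof -
    have "sqrt c \<le> \<sigma>" unfolding \<sigma>_def by simp
    then have "sqrt c * sqrt c \<le> \<sigma> * \<sigma>" using c01 \<sigma>01 by (intro mult_mono) auto
    then show ?thesis using c01 by simp
  qed
  define Kc where "Kc = 5 * K0 + (1 + K0) * (1 + 4 * K0) / 2"
  define K1 where "K1 = (K0 + K0) / 2 + (1 + K0) * (1 + K0) / 4"
  define Cst where "Cst = Kc + K1 + 1"
  have K0: "0 \<le> K0" by (rule K0_nonneg)
  have Kc0: "0 \<le> Kc" and K10: "0 \<le> K1" using K0 unfolding Kc_def K1_def by auto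
  have Cst0: "Cst > 0" using Kc0 K10 unfolding Cst_def by simp
  have main: "\<bar>covariance M (y 0) (y (int k))\<bar> \<le> Cst * \<sigma> ^ ((k - q - 1) div L)" for k
  proof (cases "q < k")
    case True
    define n where "n = (k - q - 1) div L"
    have "n * L \<le> k - q - 1" unfolding n_def by simp
    then have lt: "int n * int L + int q < int k" using True by (simp flip: of_nat_mult of_nat_add)
    have sn: "\<sigma> ^ n > 0" using \<sigma>01 by simp
    have cn: "c ^ n \<le> \<sigma> ^ n * \<sigma> ^ n"
      using power_mono[OF c\<sigma> c01(1), of n] by (simp add: power_mult_distrib)
    have q1: "4 * K0 * c ^ n / \<sigma> ^ n \<le> 4 * K0 * \<sigma> ^ n"
      using cn sn K0 by (simp add: divide_le_eq mult_left_mono)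
    have "\<bar>covariance M (y 0) (y (int k))\<bar> \<le>
      2 * ((\<sigma> ^ n * K0 + 4 * K0 * c ^ n / \<sigma> ^ n) / 2 + (1 + K0) * (\<sigma> ^ n + 4 * K0 * c ^ n / \<sigma> ^ n) / 4)"
      using cov_main[OF lt sn] unfolding c_def .
    also have "\<dots> \<le> 2 * ((\<sigma> ^ n * K0 + 4 * K0 * \<sigma> ^ n) / 2 + (1 + K0) * (\<sigma> ^ n + 4 * K0 * \<sigma> ^ n) / 4)"
      using q1 K0 sn by (intro mult_left_mono add_mono divide_right_mono) auto
    also have "\<dots> = Kc * \<sigma> ^ n" unfolding Kc_def by (simp add: algebra_simps)
    also have "\<dots> \<le> Cst * \<sigma> ^ n" using sn K10 unfolding Cst_def by (intro mult_right_mono) auto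
    finally show ?thesis unfolding n_def .
  next
    case False
    then have "(k - q - 1) div L = 0" by simp
    moreover have "\<bar>covariance M (y 0) (y (int k))\<bar> \<le> K1" unfolding K1_def by (rule cov_crude)
    ultimately show ?thesis using Kc0 unfolding Cst_def by simp
  qed
  define \<rho> where "\<rho> = \<sigma> powr (1 / real L)"
  have \<rho>01: "0 < \<rho>" "\<rho> < 1"
  proof -
    show "0 < \<rho>" unfolding \<rho>_def using \<sigma>01 by simp
    have "\<sigma> powr (1 / real L) < 1 powr (1 / real L)"
      using \<sigma>01 L_ge by (intro powr_less_mono2) auto
    then show "\<rho> < 1" unfolding \<rho>_def by simp
  qed
  define C where "C = Cst * \<sigma> powr (- (real q + real L) / real L)"
  have C0: "C > 0" unfolding C_def using Cst0 \<sigma>01 by simp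
  have "\<bar>covariance M (y 0) (y (int k))\<bar> \<le> C * \<rho> ^ k" for k
  proof -
    define n where "n = (k - q - 1) div L"
    have "k \<le> n * L + L + q" unfolding n_def by (rule k_bound)
    then have "real k \<le> real n * real L + real L + real q" by (simp flip: of_nat_mult of_nat_add)
    then have "(real k - real q - real L) / real L \<le> real n" using L_ge by (simp add: divide_le_eq)
    then have "\<sigma> ^ n \<le> \<sigma> powr ((real k - real q - real L) / real L)"
      using \<sigma>01 by (subst powr_realpow[symmetric]) (auto intro!: powr_mono')
    also have "\<sigma> powr ((real k - real q - real L) / real L) = \<sigma> powr (- (real q + real L) / real L) * \<rho> ^ k"
    proof -
      have "real L \<noteq> 0" using L_ge by simp
      then have "(real k - real q - real L) / real L = - (real q + real L) / real L + (1 / real L) * real k"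
        by (simp add: field_simps)
      then have "\<sigma> powr ((real k - real q - real L) / real L) = \<sigma> powr (- (real q + real L) / real L) * \<sigma> powr ((1 / real L) * real k)"
        by (simp add: powr_add)
      also have "\<sigma> powr ((1 / real L) * real k) = \<rho> ^ k"
      proof -
        have "\<rho> ^ k = \<rho> powr real k" using \<rho>01 by (simp add: powr_realpow)
        also have "\<dots> = \<sigma> powr ((1 / real L) * real k)" unfolding \<rho>_def by (rule powr_powr)
        finally show ?thesis by simp
      qed
      finally show ?thesis .
    qed
    finally have "\<sigma> ^ n \<le> \<sigma> powr (- (real q + real L) / real L) * \<rho> ^ k" .
    then have "Cst * \<sigma> ^ n \<le> Cst * (\<sigma> powr (- (real q + real L) / real L) * \<rho> ^ k)"
      using Cst0 by (intro mult_left_mono) auto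
    then show ?thesis using main[of k] unfolding n_def C_def by (simp add: mult.assoc)
  qed
  then show ?thesis using C0 \<rho>01 by blast
qed

end

theorem theorem3p1:
  fixes M :: "'a measure" and e y :: "int \<Rightarrow> 'a \<Rightarrow> real"
    and q d :: nat and r \<mu>1 \<mu>2 :: real and \<phi> \<psi> :: "nat \<Rightarrow> real"
  assumes P: "prob_space M"
    and e_indep: "prob_space.indep_vars M (\<lambda>_. borel) e UNIV"
    and e_ident: "\<And>n. distr M borel (e n) = distr M borel (e 1)"
    and e_L2: "integrable M (\<lambda>\<omega>. \<bar>e 1 \<omega>\<bar>\<^sup>2)"
    and q: "q \<ge> 1" and d: "d \<ge> 1"
    and nondeg: "\<And>n. measure M {\<omega>\<in>space M.
             \<mu>2 + e n \<omega> + (\<Sum>i=1..q. \<psi> i * e (n - int i) \<omega>) \<le> r \<and>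
             \<mu>1 + e n \<omega> + (\<Sum>i=1..q. \<phi> i * e (n - int i) \<omega>) \<le> r}
         + measure M {\<omega>\<in>space M.
             \<mu>2 + e n \<omega> + (\<Sum>i=1..q. \<psi> i * e (n - int i) \<omega>) > r \<and>
             \<mu>1 + e n \<omega> + (\<Sum>i=1..q. \<phi> i * e (n - int i) \<omega>) > r} \<noteq> 0"
    and y_meas: "\<And>n. y n \<in> borel_measurable M"
    and y_stat: "strictly_stationary M y"
    and y_eq: "\<And>n. AE \<omega> in M. y n \<omega> =
        (if y (n - int d) \<omega> \<le> r
         then \<mu>1 + e n \<omega> + (\<Sum>i=1..q. \<phi> i * e (n - int i) \<omega>)
         else \<mu>2 + e n \<omega> + (\<Sum>i=1..q. \<psi> i * e (n - int i) \<omega>))"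
  shows "integrable M (\<lambda>\<omega>. (y 0 \<omega>)\<^sup>2) \<and>
    (\<exists>C \<rho>. C > 0 \<and> 0 < \<rho> \<and> \<rho> < 1 \<and>
       (\<forall>k::nat. k \<ge> 1 \<longrightarrow> \<bar>covariance M (y 0) (y (int k))\<bar> \<le> C * \<rho> ^ k) \<and>
       (covariance M (y 0) (y 0) > 0 \<longrightarrow>
          (\<lambda>k::nat. covariance M (y 0) (y (int k)) / covariance M (y 0) (y 0))
            \<in> O(\<lambda>k. \<rho> ^ k)))"
proof -
  interpret main M e q d r \<mu>1 \<mu>2 \<phi> \<psi> y
  proof (intro main.intro iidseq.intro iidseq_axioms.intro main_axioms.intro)
    show "prob_space M" by (rule P)
    show "prob_space.indep_vars M (\<lambda>_. borel) e UNIV" by (rule e_indep)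
  qed (use e_ident e_L2 d nondeg[of 0] y_meas y_eq in auto)
  have I: "integrable M (\<lambda>\<omega>. (y 0 \<omega>)\<^sup>2)" using L2_y[of 0] by (simp add: L2_def)
  obtain C \<rho> where C: "C > 0" "0 < \<rho>" "\<rho> < 1"
    and B: "\<forall>k::nat. k \<ge> 1 \<longrightarrow> \<bar>covariance M (y 0) (y (int k))\<bar> \<le> C * \<rho> ^ k"
    using final_bound by blast
  have O: "(\<lambda>k::nat. covariance M (y 0) (y (int k)) / covariance M (y 0) (y 0)) \<in> O(\<lambda>k. \<rho> ^ k)"
    if v: "covariance M (y 0) (y 0) > 0"
  proof (rule bigoI[where c = "C / covariance M (y 0) (y 0)"])
    show "\<forall>\<^sub>F k in at_top. norm (covariance M (y 0) (y (int k)) / covariance M (y 0) (y 0))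
        \<le> C / covariance M (y 0) (y 0) * norm (\<rho> ^ k)"
      unfolding eventually_at_top_linorder
    proof (intro exI[of _ 1] allI impI)
      fix k :: nat assume k: "k \<ge> 1"
      have "\<bar>covariance M (y 0) (y (int k))\<bar> / covariance M (y 0) (y 0) \<le> C * \<rho> ^ k / covariance M (y 0) (y 0)"
        using B k v by (intro divide_right_mono) auto
      then show "norm (covariance M (y 0) (y (int k)) / covariance M (y 0) (y 0))
        \<le> C / covariance M (y 0) (y 0) * norm (\<rho> ^ k)"
        using v C by (simp add: abs_mult power_abs)
    qed
  qed
  show ?thesis using I C B O by blast
qed

end
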